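(* Let $a,b$ be positive integers with $\gcd(a,b)=1$. For all $\pi\in\mathcal{D}_{b,-a}(a,b)$, $$\mathrm{word}(\mathrm{zeta}(\pi))=\mathrm{sw}^+_{b,-a}\circ\mathrm{rev}(\mathrm{word}(\pi)).$$
   Context: Partitions are drawn in English convention in the first quadrant; a partition with at most $a$ parts, each at most $b$, fits in the rectangle $[0,b]\times[0,a]$, and its diagram consists of unit squares above and to the left of its frontier, a lattice path from $(0,0)$ to $(b,a)$ with unit north (N) and east (E) steps. $\mathrm{word}(\pi)\in\{\mathrm{N},\mathrm{E}\}^*$ is the word of this frontier path (equivalently, the parts of $\pi$ are, for each N of the word, the number of E's preceding it). $\mathrm{rev}$ reverses a word. The $(b,-a)$-level of a lattice point $(x,y)$ is $by-ax$; a unit lattice square $[x,x+1]\times[y,y+1]$ has the level of its southeast corner, $by-a(x+1)$. $\mathcal{D}_{b,-a}(a,b)$ is the set of partitions fitting in the $a\times b$ rectangle whose frontier path visits only lattice points of nonnegative level (i.e. stays weakly above the line $by=ax$). For a word $w=w_1\cdots w_n$, the levels are $l_0=0$, $l_i=l_{i-1}+b$ if $w_i=\mathrm{N}$, $l_i=l_{i-1}-a$ if $w_i=\mathrm{E}$. The sweep map $\mathrm{sw}^+_{b,-a}(w)$ is obtained by: for $k=0,-1,-2,\ldots$ and then $k=\ldots,3,2,1$ (all nonpositive values in decreasing order, then all positive values in decreasing order), scan $w$ from left to right and append each letter $w_i$ ($i\ge1$) with $l_i=k$. The hook of a cell $c$ of a partition diagram consists of $c$, the cells below $c$ in its column and the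 cells to the right of $c$ in its row; its hook-length $h(c)$ is the number of cells in the hook. The map $\mathrm{zeta}$: given $\pi\in\mathcal{D}_{b,-a}(a,b)$, consider the levels of all unit lattice squares lying above the line $by=ax$ and below the frontier path of $\pi$ (i.e. in the region bounded by the path and the segment from $(0,0)$ to $(b,a)$); these are distinct positive integers. Let $\nu=f(\pi)$ be the unique partition whose first-column cells have exactly these hook-lengths. Then $\rho=\mathrm{zeta}(\pi)$ has one row for each row of $\nu$ whose first-column hook-length equals the level of a square lying directly east of a north step of the frontier path of $\pi$ (the square $[x,x+1]\times[y,y+1]$ for a north step from $(x,y)$ to $(x,y+1)$), and the length of that row of $\rho$ is the number of cells in the corresponding row of $\nu$ with hook-length at most $b$. $\mathrm{word}(\rho)$ is taken for $\rho$ regarded as fitting in the $a\times b$ rectangle. *)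

theory Defs
  imports Main
begin

datatype step = N | E

definition countN :: "step list \<Rightarrow> nat" where
  "countN u = length (filter (\<lambda>s. s = N) u)"

definition countE :: "step list \<Rightarrow> nat" where
  "countE u = length (filter (\<lambda>s. s = E) u)"

definition is_partition :: "nat list \<Rightarrow> bool" where
  "is_partition lam \<longleftrightarrow> sorted_wrt (\<ge>) lam \<and> (\<forall>p\<in>set lam. 0 < p)"

definition fits :: "nat \<Rightarrow> nat \<Rightarrow> nat list \<Rightarrow> bool" where
  "fits a b lam \<longleftrightarrow> length lam \<le> a \<and> (\<forall>p\<in>set lam. p \<le> b)"

text \<open>Frontier word: the increasing list mu (parts padded by zeros, read bottom to top)
  gives, for the k-th north step, the number of east steps preceding it.\<close>
fun word_aux :: "nat \<Rightarrow> nat list \<Rightarrow> step list" where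
  "word_aux c [] = []"
| "word_aux c (m # ms) = replicate (m - c) E @ [N] @ word_aux m ms"

definition word :: "nat \<Rightarrow> nat \<Rightarrow> nat list \<Rightarrow> step list" where
  "word a b lam = (let \<mu> = replicate (a - length lam) 0 @ rev lam
                  in word_aux 0 \<mu> @ replicate (b - last (0 # \<mu>)) E)"

definition ptlev :: "nat \<Rightarrow> nat \<Rightarrow> nat \<Rightarrow> nat \<Rightarrow> int" where
  "ptlev a b x y = int b * int y - int a * int x"

definition wlev :: "nat \<Rightarrow> nat \<Rightarrow> step list \<Rightarrow> int" where
  "wlev a b u = ptlev a b (countE u) (countN u)"

text \<open>Level of the unit square [x,x+1]x[y,y+1]: level of its southeast corner.\<close>
definition sqlev :: "nat \<Rightarrow> nat \<Rightarrow> nat \<Rightarrow> nat \<Rightarrow> int" where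
  "sqlev a b x y = ptlev a b (x + 1) y"

definition Dset :: "nat \<Rightarrow> nat \<Rightarrow> nat list set" where
  "Dset a b = {lam. is_partition lam \<and> fits a b lam \<and>
                   (\<forall>i \<le> length (word a b lam). 0 \<le> wlev a b (take i (word a b lam)))}"

definition sweep :: "nat \<Rightarrow> nat \<Rightarrow> step list \<Rightarrow> step list" where
  "sweep a b w =
    (let n = length w;
         l = (\<lambda>i. wlev a b (take i w));
         ls = map l [1..<n+1];
         lo = Min (insert 0 (set ls));
         hi = Max (insert 0 (set ls))
     in concat (map (\<lambda>k. [w ! i. i \<leftarrow> [0..<n], l (i+1) = k])
                    (rev [lo..0] @ rev [1..hi])))"

text \<open>Rows indexed from 0 (top), columns from 0; cell (i,j) exists iff j < lambda!i.\<close>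
definition hook :: "nat list \<Rightarrow> nat \<Rightarrow> nat \<Rightarrow> nat" where
  "hook \<nu> i j = (\<nu> ! i - j) + length (filter (\<lambda>p. j < p) (drop (i+1) \<nu>))"

definition first_col_hooks :: "nat list \<Rightarrow> nat set" where
  "first_col_hooks \<nu> = {hook \<nu> i 0 | i. i < length \<nu>}"

definition nsteps :: "step list \<Rightarrow> (nat \<times> nat) set" where
  "nsteps w = {(countE (take i w), countN (take i w)) | i. i < length w \<and> w ! i = N}"

text \<open>Squares above the line by = ax and below the frontier path: in row y the square
  [x,x+1]x[y,y+1] lies weakly right of the north step of that row.\<close>
definition region_levels :: "nat \<Rightarrow> nat \<Rightarrow> nat list \<Rightarrow> int set" where
  "region_levels a b \<pi> = {sqlev a b x y | x y. x < b \<and> y < a \<and> 0 < sqlev a b x y \<and>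
                         (\<exists>x'. (x', y) \<in> nsteps (word a b \<pi>) \<and> x' \<le> x)}"

definition east_levels :: "nat \<Rightarrow> nat \<Rightarrow> nat list \<Rightarrow> int set" where
  "east_levels a b \<pi> = {sqlev a b x y | x y. (x, y) \<in> nsteps (word a b \<pi>)}"

definition f_map :: "nat \<Rightarrow> nat \<Rightarrow> nat list \<Rightarrow> nat list" where
  "f_map a b \<pi> = (THE \<nu>. is_partition \<nu> \<and> int ` first_col_hooks \<nu> = region_levels a b \<pi>)"

definition zeta :: "nat \<Rightarrow> nat \<Rightarrow> nat list \<Rightarrow> nat list" where
  "zeta a b \<pi> = (let \<nu> = f_map a b \<pi> in
     map (\<lambda>i. card {j. j < \<nu> ! i \<and> hook \<nu> i j \<le> b})
         (filter (\<lambda>i. int (hook \<nu> i 0) \<in> east_levels a b \<pi>) [0..<length \<nu>]))"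

end

theory Submission
  imports Defs
begin


fun prof_aux :: "nat \<Rightarrow> step list \<Rightarrow> nat list" where
  "prof_aux c [] = []"
| "prof_aux c (E # u) = prof_aux (Suc c) u"
| "prof_aux c (N # u) = c # prof_aux c u"

lemma countE_simps[simp]: "countE [] = 0" "countE (E # u) = Suc (countE u)" "countE (N # u) = countE u"
  by (auto simp: countE_def)
lemma countN_simps[simp]: "countN [] = 0" "countN (N # u) = Suc (countN u)" "countN (E # u) = countN u"
  by (auto simp: countN_def)
lemma countE_app[simp]: "countE (u @ v) = countE u + countE v" by (simp add: countE_def)
lemma countN_app[simp]: "countN (u @ v) = countN u + countN v" by (simp add: countN_def)
lemma countE_rev[simp]: "countE (rev u) = countE u" by (simp add: countE_def rev_filter[symmetric])
lemma countN_rev[simp]: "countN (rev u) = countN u" by (simp add: countN_def rev_filter[symmetric])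

lemma prof_aux_ge: "x \<in> set (prof_aux c u) \<Longrightarrow> c \<le> x"
  by (induction c u rule: prof_aux.induct) fastforce+

lemma word_aux_E: "c < m \<Longrightarrow> word_aux c (m # ms) = E # word_aux (Suc c) (m # ms)"
proof -
  assume "c < m"
  then have "m - c = Suc (m - Suc c)" by simp
  then show ?thesis by simp
qed

lemma prof_aux_word:
  "word_aux c (prof_aux c u) @ replicate (c + countE u - last (c # prof_aux c u)) E = u"
proof (induction c u rule: prof_aux.induct)
  case (1 c) then show ?case by simp
next
  case (2 c u)
  show ?case
  proof (cases "prof_aux (Suc c) u")
    case Nil
    with 2 show ?thesis by simp
  next
    case (Cons m ms)
    then have "Suc c \<le> m" using prof_aux_ge[of m "Suc c" u] by simp
    then have "word_aux c (m # ms) = E # word_aux (Suc c) (m # ms)" using word_aux_E[of c m ms] by simp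
    moreover have "last (c # m # ms) = last (Suc c # m # ms)" by simp
    ultimately show ?thesis using 2 Cons by simp
  qed
next
  case (3 c u)
  then show ?case by (cases "prof_aux c u") auto
qed

lemma prof_aux_map:
  assumes "sorted_wrt (<) (xs :: int list)"
  shows "prof_aux c (map st xs) =
    map (\<lambda>l. c + card {l' \<in> set xs. st l' = E \<and> l' < l}) (filter (\<lambda>l. st l = N) xs)"
  using assms
proof (induction xs arbitrary: c)
  case Nil then show ?case by simp
next
  case (Cons x xs)
  have gt: "\<forall>y\<in>set xs. x < y" using Cons.prems by simp
  have sw: "sorted_wrt (<) xs" using Cons.prems by simp
  show ?case
  proof (cases "st x")
    case N
    have e0: "{l' \<in> set (x # xs). st l' = E \<and> l' < x} = {}" using gt N by auto
    have "\<And>l. l \<in> set xs \<Longrightarrow> {l' \<in> set (x # xs). st l' = E \<and> l' < l} = {l' \<in> set xs. st l' = E \<and> l' < l}"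
      using N by auto
    then show ?thesis using N Cons.IH[OF sw, of c] e0
      by (auto intro!: map_cong)
  next
    case E
    have "\<And>l. l \<in> set xs \<Longrightarrow> {l' \<in> set (x # xs). st l' = E \<and> l' < l} = insert x {l' \<in> set xs. st l' = E \<and> l' < l}"
      using E gt by auto
    moreover have "\<And>l. x \<notin> {l' \<in> set xs. st l' = E \<and> l' < l}" using gt by auto
    ultimately have "\<And>l. l \<in> set xs \<Longrightarrow> card {l' \<in> set (x # xs). st l' = E \<and> l' < l} = Suc (card {l' \<in> set xs. st l' = E \<and> l' < l})"
      by simp
    then show ?thesis using E Cons.IH[OF sw, of "Suc c"]
      by (auto intro!: map_cong)
  qed
qed

lemma concat_map_opt: "concat (map (\<lambda>k. if P k then [f k] else []) ks) = map f (filter P ks)"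
  by (induction ks) auto

lemma list_singleton: "distinct xs \<Longrightarrow> set xs = {x} \<Longrightarrow> xs = [x]"
proof -
  assume d: "distinct xs" and s: "set xs = {x}"
  then have "length xs = 1" using distinct_card[OF d] by simp
  then obtain y where "xs = [y]" by (cases xs) auto
  with s show ?thesis by simp
qed



lemma lf_take_Suc: "i < length u \<Longrightarrow>
  length (filter P (take (Suc i) u)) = length (filter P (take i u)) + (if P (u!i) then 1 else 0)"
  by (simp add: take_Suc_conv_app_nth)

lemma lf_take_mono: "i \<le> j \<Longrightarrow> length (filter P (take i u)) \<le> length (filter P (take j u))"
proof -
  assume "i \<le> j"
  then have "take j u = take i u @ take (j - i) (drop i u)"
    by (metis le_add_diff_inverse take_add)
  then show ?thesis by simp
qed

lemma lf_take_strict: "i < j \<Longrightarrow> j \<le> length u \<Longrightarrow> P (u!i) \<Longrightarrow>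
   length (filter P (take i u)) < length (filter P (take j u))"
proof -
  assume a: "i < j" "j \<le> length u" "P (u!i)"
  then have "length (filter P (take (Suc i) u)) = Suc (length (filter P (take i u)))"
    using lf_take_Suc[of i u P] by simp
  moreover have "length (filter P (take (Suc i) u)) \<le> length (filter P (take j u))"
    using a by (intro lf_take_mono) simp
  ultimately show ?thesis by simp
qed

lemma lf_exists: "c < length (filter P u) \<Longrightarrow> \<exists>i<length u. P (u!i) \<and> length (filter P (take i u)) = c"
proof (induction u arbitrary: c)
  case Nil then show ?case by simp
next
  case (Cons x u)
  show ?case
  proof (cases "P x")
    case True
    show ?thesis
    proof (cases c)
      case 0 then show ?thesis using True by (intro exI[of _ 0]) simp
    next
      case (Suc c')
      then have "c' < length (filter P u)" using Cons.prems True by simp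
      then obtain i where "i < length u" "P (u!i)" "length (filter P (take i u)) = c'" using Cons.IH by blast
      then show ?thesis using True Suc by (intro exI[of _ "Suc i"]) simp
    qed
  next
    case False
    then have "c < length (filter P u)" using Cons.prems by simp
    then obtain i where "i < length u" "P (u!i)" "length (filter P (take i u)) = c" using Cons.IH by blast
    then show ?thesis using False by (intro exI[of _ "Suc i"]) simp
  qed
qed

lemma NE_len: "countN v + countE v = length v"
proof (induction v)
  case Nil then show ?case by simp
next
  case (Cons x v) then show ?case by (cases x) simp_all
qed
lemma not_N: "(s \<noteq> N) = (s = E)" by (cases s) auto
lemma not_E: "(s \<noteq> E) = (s = N)" by (cases s) auto

lemma cN_take_Suc: "i < length u \<Longrightarrow> countN (take (Suc i) u) = countN (take i u) + (if u!i = N then 1 else 0)"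
  unfolding countN_def by (rule lf_take_Suc)
lemma cE_take_Suc: "i < length u \<Longrightarrow> countE (take (Suc i) u) = countE (take i u) + (if u!i = E then 1 else 0)"
  unfolding countE_def by (rule lf_take_Suc)
lemma cN_mono: "i \<le> j \<Longrightarrow> countN (take i u) \<le> countN (take j u)"
  unfolding countN_def by (rule lf_take_mono)
lemma cE_mono: "i \<le> j \<Longrightarrow> countE (take i u) \<le> countE (take j u)"
  unfolding countE_def by (rule lf_take_mono)
lemma cN_strict: "i < j \<Longrightarrow> j \<le> length u \<Longrightarrow> u!i = N \<Longrightarrow> countN (take i u) < countN (take j u)"
  unfolding countN_def by (rule lf_take_strict)
lemma cE_strict: "i < j \<Longrightarrow> j \<le> length u \<Longrightarrow> u!i = E \<Longrightarrow> countE (take i u) < countE (take j u)"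
  unfolding countE_def by (rule lf_take_strict)
lemma cN_exists: "c < countN u \<Longrightarrow> \<exists>i<length u. u!i = N \<and> countN (take i u) = c"
  unfolding countN_def by (rule lf_exists)
lemma cE_exists: "c < countE u \<Longrightarrow> \<exists>i<length u. u!i = E \<and> countE (take i u) = c"
  unfolding countE_def by (rule lf_exists)
lemma cN_le: "countN (take i u) \<le> countN u"
  by (metis append_take_drop_id countN_app le_add1)
lemma cE_le: "countE (take i u) \<le> countE u"
  by (metis append_take_drop_id countE_app le_add1)
lemma cN_lt: "i < length u \<Longrightarrow> u!i = N \<Longrightarrow> countN (take i u) < countN u"
  using cN_strict[of i "length u" u] by simp
lemma cE_lt: "i < length u \<Longrightarrow> u!i = E \<Longrightarrow> countE (take i u) < countE u"
  using cE_strict[of i "length u" u] by simp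

lemma word_aux_counts: "sorted (c # mu) \<Longrightarrow>
   countN (word_aux c mu) = length mu \<and> countE (word_aux c mu) = last (c # mu) - c"
proof (induction mu arbitrary: c)
  case Nil then show ?case by simp
next
  case (Cons m mu)
  have "sorted (m # mu)" using Cons.prems by simp
  note IH = Cons.IH[OF this]
  have cm: "c \<le> m" using Cons.prems by simp
  have "last (m # mu) \<ge> m" using \<open>sorted (m # mu)\<close>
    by (metis last_in_set list.discI sorted_simps(2) order.refl set_ConsD)
  then show ?case using IH cm by (simp add: countE_def countN_def)
qed

lemma word_counts:
  assumes "is_partition lam" "fits a b lam"
  shows "countN (word a b lam) = a" "countE (word a b lam) = b" "length (word a b lam) = a + b"
proof -
  define mu where "mu = replicate (a - length lam) 0 @ rev lam"
  have sl: "sorted (rev lam)" using assms(1) unfolding is_partition_def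
    by (simp add: sorted_wrt_rev)
  have s: "sorted (0 # mu)" unfolding mu_def using sl
    by (auto simp: sorted_append)
  have la: "length mu = a" using assms(2) unfolding mu_def fits_def by simp
  have lb: "last (0 # mu) \<le> b"
  proof -
    have "last (0 # mu) \<in> set (0 # mu)" by (rule last_in_set) simp
    then show ?thesis using assms(2) unfolding mu_def fits_def by auto
  qed
  have w: "word a b lam = word_aux 0 mu @ replicate (b - last (0 # mu)) E"
    unfolding word_def mu_def Let_def by simp
  show "countN (word a b lam) = a" using word_aux_counts[OF s] la w
    by (simp add: countN_def)
  show "countE (word a b lam) = b" using word_aux_counts[OF s] lb w
    by (simp add: countE_def)
  then show "length (word a b lam) = a + b" using NE_len[of "word a b lam"]
    \<open>countN (word a b lam) = a\<close> by simp
qed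



lemma slos_eq: "finite A \<Longrightarrow> sorted_wrt (<) l \<Longrightarrow> set l = A \<Longrightarrow> sorted_list_of_set A = l"
  using sorted_list_of_set.idem_if_sorted_distinct strict_sorted_iff by blast

locale pth =
  fixes a b :: nat and w :: "step list"
  assumes apos: "0 < a" and bpos: "0 < b" and cop: "coprime a b"
    and cN: "countN w = a" and cE: "countE w = b"
    and dyck: "\<forall>i \<le> length w. 0 \<le> wlev a b (take i w)"
begin

abbreviation "n \<equiv> a + b"
definition K :: "nat \<Rightarrow> int" where "K j = wlev a b (take j w)"

lemma len: "length w = n" using NE_len[of w] cN cE by simp

lemma K_eq: "K j = int b * int (countN (take j w)) - int a * int (countE (take j w))"
  unfolding K_def wlev_def ptlev_def by simp

lemma K_nonneg: "j \<le> n \<Longrightarrow> 0 \<le> K j" using dyck len unfolding K_def by simp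

lemma take_sum: "j \<le> n \<Longrightarrow> countN (take j w) + countE (take j w) = j"
  using NE_len[of "take j w"] len by simp

lemma K_end: "K n = 0" using K_eq len cN cE by simp

lemma K_inj_aux:
  assumes i: "i < n" and j: "j < n" and eq: "K i = K j"
    and le: "countN (take j w) \<le> countN (take i w)"
  shows "i = j"
proof -
  define p where "p = countN (take i w)"
  define q where "q = countN (take j w)"
  define r where "r = countE (take i w)"
  define s where "s = countE (take j w)"
  have e1: "int b * int p - int a * int r = int b * int q - int a * int s"
    using eq K_eq p_def q_def r_def s_def by simp
  have e3: "int b * (int p - int q) = int a * (int r - int s)" using e1 by (simp add: algebra_simps)
  have lq: "q \<le> p" using le p_def q_def by simp
  have "0 \<le> int b * (int p - int q)" using lq by simp
  then have "0 \<le> int a * (int r - int s)" using e3 by simp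
  then have "0 \<le> int r - int s" using apos by (simp add: zero_le_mult_iff)
  then have rs: "s \<le> r" by simp
  have "int (b * (p - q)) = int (a * (r - s))" using e3 lq rs by (simp add: of_nat_diff)
  then have e2: "b * (p - q) = a * (r - s)" by (simp only: of_nat_eq_iff)
  then have "a dvd b * (p - q)" by simp
  then have "a dvd (p - q)" using cop coprime_dvd_mult_right_iff[of a b "p - q"] by simp
  moreover have "p - q \<le> a" using p_def cN_le[of i w] cN by simp
  ultimately have "p - q = 0 \<or> p - q = a"
    by (cases "p - q = 0") (auto dest: dvd_imp_le)
  then show ?thesis
  proof
    assume "p - q = 0"
    then have "r - s = 0" using e2 apos by simp
    then have "r = s" using rs by simp
    moreover have "p = q" using \<open>p - q = 0\<close> lq by simp
    moreover have "p + r = i" using take_sum[of i] i unfolding p_def r_def by simp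
    moreover have "q + s = j" using take_sum[of j] j unfolding q_def s_def by simp
    ultimately show ?thesis by simp
  next
    assume "p - q = a"
    then have "r - s = b" using e2 apos by (simp add: mult.commute)
    then have "r = b" using r_def cE_le[of i w] cE by simp
    moreover have "p = a" using \<open>p - q = a\<close> p_def cN_le[of i w] cN by simp
    moreover have "p + r = i" using take_sum[of i] i unfolding p_def r_def by simp
    ultimately show ?thesis using i by simp
  qed
qed

lemma K_inj: "i < n \<Longrightarrow> j < n \<Longrightarrow> K i = K j \<Longrightarrow> i = j"
  using K_inj_aux by (metis nat_le_linear)

lemma K_Suc: "j < n \<Longrightarrow> K (Suc j) = K j + (if w!j = N then int b else - int a)"
proof -
  assume j: "j < n"
  show ?thesis
  proof (cases "w!j")
    case N
    then show ?thesis using K_eq[of "Suc j"] K_eq[of j] cN_take_Suc[of j w] cE_take_Suc[of j w] len j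
      by (simp add: algebra_simps)
  next
    case E
    then show ?thesis using K_eq[of "Suc j"] K_eq[of j] cN_take_Suc[of j w] cE_take_Suc[of j w] len j
      by (simp add: algebra_simps)
  qed
qed

lemma K_E_ge: "j < n \<Longrightarrow> w!j = E \<Longrightarrow> int a \<le> K j"
  using K_Suc[of j] K_nonneg[of "Suc j"] by simp

end


context pth begin

definition Lv :: "int set" where "Lv = K ` {..<n}"
definition st :: "int \<Rightarrow> step" where "st l = w ! (THE j. j < n \<and> K j = l)"

lemma st_K: "j < n \<Longrightarrow> st (K j) = w ! j"
proof -
  assume j: "j < n"
  have "(THE j'. j' < n \<and> K j' = K j) = j"
    using j K_inj by (intro the_equality) auto
  then show ?thesis unfolding st_def by simp
qed

lemma Lv_fin: "finite Lv" unfolding Lv_def by simp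

lemma wlev_rev_drop: "k \<le> n \<Longrightarrow> wlev a b (rev (drop k w)) = - K k"
proof -
  assume k: "k \<le> n"
  have "countN (drop k w) = countN w - countN (take k w)"
    using countN_app[of "take k w" "drop k w"] by simp
  moreover have "countE (drop k w) = countE w - countE (take k w)"
    using countE_app[of "take k w" "drop k w"] by simp
  ultimately show ?thesis using cN cE cN_le[of k w] cE_le[of k w] K_eq[of k]
    unfolding wlev_def ptlev_def by (simp add: of_nat_diff algebra_simps)
qed

lemma lev_rev: "i < n \<Longrightarrow> wlev a b (take (Suc i) (rev w)) = - K (n - Suc i)"
  using wlev_rev_drop[of "n - Suc i"] len by (simp add: take_rev)

lemma filt_single:
  assumes "x < n" "\<And>i. i < n \<Longrightarrow> P i \<longleftrightarrow> i = x"
  shows "filter P [0..<n] = [x]"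
proof (rule list_singleton)
  show "distinct (filter P [0..<n])" by simp
  show "set (filter P [0..<n]) = {x}" using assms by auto
qed

lemma sweep_eq: "sweep a b (rev w) = map st (sorted_list_of_set Lv)"
proof -
  define l where "l = (\<lambda>i. wlev a b (take i (rev w)))"
  define ls where "ls = map l [1..<n+1]"
  define lo where "lo = Min (insert 0 (set ls))"
  define hi where "hi = Max (insert 0 (set ls))"
  have lsv: "set ls = (\<lambda>j. - K j) ` {..<n}"
  proof -
    have "set [1..<n+1] = Suc ` {..<n}"
      unfolding set_upt image_Suc_lessThan by (simp add: atLeastLessThanSuc_atLeastAtMost)
    then have "set ls = (\<lambda>i. l (Suc i)) ` {..<n}" unfolding ls_def
      by (simp add: image_image)
    also have "\<dots> = (\<lambda>i. - K (n - Suc i)) ` {..<n}" unfolding l_def using lev_rev by auto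
    also have "\<dots> = (\<lambda>j. - K j) ` {..<n}"
    proof (rule set_eqI, rule iffI)
      fix x assume "x \<in> (\<lambda>i. - K (n - Suc i)) ` {..<n}"
      then show "x \<in> (\<lambda>j. - K j) ` {..<n}" by auto
    next
      fix x assume "x \<in> (\<lambda>j. - K j) ` {..<n}"
      then obtain j where "j < n" "x = - K j" by auto
      then show "x \<in> (\<lambda>i. - K (n - Suc i)) ` {..<n}"
        by (intro image_eqI[of _ _ "n - Suc j"]) auto
    qed
    finally show ?thesis .
  qed
  have hi0: "hi = 0"
  proof -
    have "\<forall>x\<in>insert 0 (set ls). x \<le> 0" using lsv K_nonneg by auto
    then show ?thesis unfolding hi_def by (intro Max_eqI) auto
  qed
  have lo_le: "\<And>j. j < n \<Longrightarrow> lo \<le> - K j" unfolding lo_def using lsv by (intro Min_le) auto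
  have lo0: "lo \<le> 0" unfolding lo_def by (intro Min_le) auto
  define F where "F = (\<lambda>k. [rev w ! i. i \<leftarrow> [0..<n], l (i+1) = k])"
  have F: "F k = (if -k \<in> Lv then [st (-k)] else [])" for k
  proof (cases "-k \<in> Lv")
    case True
    then obtain j where j: "j < n" "K j = -k" unfolding Lv_def by auto
    have "filter (\<lambda>i. l (i+1) = k) [0..<n] = [n - Suc j]"
    proof (rule filt_single)
      show "n - Suc j < n" using j by simp
      fix i assume i: "i < n"
      have "l (i+1) = - K (n - Suc i)" using lev_rev[OF i] l_def by simp
      then show "l (i+1) = k \<longleftrightarrow> i = n - Suc j"
        using K_inj[of "n - Suc i" j] i j by auto
    qed
    moreover have "st (-k) = w ! j" using st_K[of j] j by simp
    ultimately show ?thesis unfolding F_def concat_map_opt using True j len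
      by (simp add: rev_nth)
  next
    case False
    have "filter (\<lambda>i. l (i+1) = k) [0..<n] = []"
      using False lev_rev l_def unfolding Lv_def by (auto simp: filter_empty_conv)
    then show ?thesis unfolding F_def concat_map_opt using False by simp
  qed
  have "sweep a b (rev w) = concat (map F (rev [lo..0] @ rev [1..hi]))"
    unfolding sweep_def Let_def F_def lo_def hi_def ls_def l_def using len by simp
  also have "\<dots> = concat (map F (rev [lo..0]))" using hi0 by simp
  also have "\<dots> = map (\<lambda>k. st (-k)) (filter (\<lambda>k. -k \<in> Lv) (rev [lo..0]))"
    unfolding F concat_map_opt ..
  also have "\<dots> = map st (filter (\<lambda>x. x \<in> Lv) (map uminus (rev [lo..0])))"
    by (simp add: filter_map comp_def)
  also have "filter (\<lambda>x. x \<in> Lv) (map uminus (rev [lo..0])) = sorted_list_of_set Lv"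
  proof (rule sym, rule slos_eq[OF Lv_fin])
    have "sorted_wrt (<) (map uminus (rev [lo..0]))"
      using sorted_wrt_upto[of lo 0] by (simp add: sorted_wrt_map sorted_wrt_rev)
    then show "sorted_wrt (<) (filter (\<lambda>x. x \<in> Lv) (map uminus (rev [lo..0])))"
      by (rule sorted_wrt_filter)
    show "set (filter (\<lambda>x. x \<in> Lv) (map uminus (rev [lo..0]))) = Lv"
    proof -
      have "\<And>x. x \<in> Lv \<Longrightarrow> x \<in> uminus ` {lo..0}"
      proof -
        fix x assume "x \<in> Lv"
        then obtain j where "j < n" "x = K j" unfolding Lv_def by auto
        then show "x \<in> uminus ` {lo..0}" using lo_le[of j] K_nonneg[of j]
          by (intro image_eqI[of _ _ "-x"]) auto
      qed
      then show ?thesis by auto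
    qed
  qed
  finally show ?thesis .
qed

end


context pth begin

definition NL :: "int set" where "NL = {l \<in> Lv. st l = N}"
definition ESt :: "int set" where "ESt = {l \<in> Lv. st l = E}"
definition cnt :: "int \<Rightarrow> nat" where "cnt l = card {l' \<in> Lv. st l' = E \<and> l' < l}"

lemma NL_img: "NL = K ` {j. j < n \<and> w!j = N}"
  unfolding NL_def Lv_def using st_K by auto
lemma ESt_img: "ESt = K ` {j. j < n \<and> w!j = E}"
  unfolding ESt_def Lv_def using st_K by auto

lemma K_inj_on: "inj_on K {j. j < n \<and> P j}"
  using K_inj by (auto simp: inj_on_def)

lemma card_pos: "card {j. j < n \<and> w!j = s} = length (filter (\<lambda>x. x = s) w)"
  using length_filter_conv_card[of "\<lambda>x. x = s" w] len by simp

lemma card_NL: "card NL = a"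
  unfolding NL_img using card_image[OF K_inj_on] card_pos[of N] cN unfolding countN_def by simp
lemma card_ESt: "card ESt = b"
  unfolding ESt_img using card_image[OF K_inj_on] card_pos[of E] cE unfolding countE_def by simp

lemma fin_NL: "finite NL" unfolding NL_def using Lv_fin by simp

definition T where "T = map st (sorted_list_of_set Lv)"

lemma countE_T: "countE T = b"
proof -
  have "countE T = length (filter (\<lambda>l. st l = E) (sorted_list_of_set Lv))"
    unfolding T_def countE_def by (simp add: filter_map comp_def)
  also have "\<dots> = card (set (filter (\<lambda>l. st l = E) (sorted_list_of_set Lv)))"
    by (rule distinct_card[symmetric]) simp
  also have "\<dots> = card ESt" unfolding ESt_def using Lv_fin by simp
  finally show ?thesis using card_ESt by simp
qed

lemma prof_T: "prof_aux 0 T = map cnt (sorted_list_of_set NL)"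
proof -
  have "prof_aux 0 T = map (\<lambda>l. card {l' \<in> Lv. st l' = E \<and> l' < l}) (filter (\<lambda>l. st l = N) (sorted_list_of_set Lv))"
    unfolding T_def using prof_aux_map[of "sorted_list_of_set Lv" 0 st] Lv_fin by simp
  also have "filter (\<lambda>l. st l = N) (sorted_list_of_set Lv) = sorted_list_of_set NL"
    by (rule sym, rule slos_eq[OF fin_NL]) (auto simp: NL_def Lv_fin sorted_wrt_filter)
  finally show ?thesis unfolding cnt_def by simp
qed

lemma T_word: "T = word_aux 0 (map cnt (sorted_list_of_set NL)) @
    replicate (b - last (0 # map cnt (sorted_list_of_set NL))) E"
  using prof_aux_word[of 0 T] prof_T countE_T by simp

definition EM :: "int set" where "EM = (\<lambda>l. l - int a) ` ESt"

lemma EM_nonneg: "m \<in> EM \<Longrightarrow> 0 \<le> m"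
  unfolding EM_def ESt_img using K_E_ge by fastforce

lemma sqlev_K: "sqlev a b (countE (take i w)) (countN (take i w)) = K i - int a"
  unfolding sqlev_def ptlev_def K_eq by (simp add: algebra_simps)

lemma east_eq: "{sqlev a b x y | x y. (x, y) \<in> nsteps w} = (\<lambda>l. l - int a) ` NL"
proof (rule set_eqI, rule iffI)
  fix z assume "z \<in> {sqlev a b x y | x y. (x, y) \<in> nsteps w}"
  then obtain i where "i < length w" "w!i = N" "z = sqlev a b (countE (take i w)) (countN (take i w))"
    unfolding nsteps_def by blast
  then show "z \<in> (\<lambda>l. l - int a) ` NL" unfolding NL_img using len sqlev_K by auto
next
  fix z assume "z \<in> (\<lambda>l. l - int a) ` NL"
  then obtain i where i: "i < n" "w!i = N" "z = K i - int a" unfolding NL_img by auto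
  then have "(countE (take i w), countN (take i w)) \<in> nsteps w" unfolding nsteps_def using len by auto
  moreover have "z = sqlev a b (countE (take i w)) (countN (take i w))" using i sqlev_K by simp
  ultimately show "z \<in> {sqlev a b x y | x y. (x, y) \<in> nsteps w}" by blast
qed

lemma region_eq:
  "{sqlev a b x y | x y. x < b \<and> y < a \<and> 0 < sqlev a b x y \<and>
      (\<exists>x'. (x', y) \<in> nsteps w \<and> x' \<le> x)}
   = {m - int b * t | m t. m \<in> EM \<and> 1 \<le> t \<and> 0 < m - int b * t}"
  (is "?L = ?R")
proof (rule set_eqI, rule iffI)
  fix z assume "z \<in> ?L"
  then obtain x y x' i where z: "z = sqlev a b x y" and xb: "x < b" and ya: "y < a" and zp: "0 < z"
    and i: "i < length w" "w!i = N" "x' = countE (take i w)" "y = countN (take i w)" and xx: "x' \<le> x"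
    unfolding nsteps_def by blast
  obtain i' where i': "i' < length w" "w!i' = E" "countE (take i' w) = x"
    using cE_exists[of x w] xb cE by auto
  have "i < i'"
  proof (rule ccontr)
    assume "\<not> i < i'"
    then have "i' < i" using i i' by (metis linorder_neqE_nat step.distinct(1))
    then have "countE (take i' w) < countE (take i w)" using cE_strict[of i' i w] i i' by simp
    then show False using i i' xx by simp
  qed
  then have ye: "y < countN (take i' w)" using cN_strict[of i i' w] i i' by simp
  define e where "e = countN (take i' w)"
  define t where "t = int e - int y"
  have "K i' - int a \<in> EM" unfolding EM_def ESt_img using i' len by auto
  moreover have "z = (K i' - int a) - int b * t"
    unfolding z t_def e_def sqlev_def ptlev_def K_eq using i' by (simp add: algebra_simps)
  moreover have "1 \<le> t" using ye t_def e_def by simp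
  ultimately show "z \<in> ?R" using zp by blast
next
  fix z assume "z \<in> ?R"
  then obtain m t where z: "z = m - int b * t" and m: "m \<in> EM" and t: "1 \<le> t" and zp: "0 < z" by blast
  obtain i' where i': "i' < n" "w!i' = E" "m = K i' - int a"
    using m unfolding EM_def ESt_img by auto
  define x where "x = countE (take i' w)"
  define e where "e = countN (take i' w)"
  have m_eq: "m = int b * int e - int a * (int x + 1)"
    using i' unfolding x_def e_def K_eq by (simp add: algebra_simps)
  have "int b * t < int b * int e" using zp z m_eq
    by (smt (verit) mult_nonneg_nonneg of_nat_0_le_iff)
  then have te: "t < int e" using bpos by simp
  define y where "y = e - nat t"
  have yi: "int y = int e - t" unfolding y_def using te t by simp
  have xb: "x < b" unfolding x_def using cE_lt[of i' w] i' len cE by simp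
  have ea: "e \<le> a" unfolding e_def using cN_le[of i' w] cN by simp
  have ya: "y < a" using yi ea t by simp
  have "int e = int y + t" using yi by simp
  then have zs: "z = sqlev a b x y" unfolding z m_eq sqlev_def ptlev_def
    by (simp add: algebra_simps)
  obtain i where i: "i < length w" "w!i = N" "countN (take i w) = y"
    using cN_exists[of y w] ya cN by auto
  have "i < i'"
  proof (rule ccontr)
    assume "\<not> i < i'"
    then have "i' < i" using i i' by (metis linorder_neqE_nat step.distinct(1))
    then have "countN (take i' w) \<le> countN (take i w)" using cN_mono by simp
    then show False using i e_def yi t by simp
  qed
  then have "countE (take i w) \<le> x" unfolding x_def using cE_mono by simp
  moreover have "(countE (take i w), y) \<in> nsteps w" unfolding nsteps_def using i by auto
  ultimately show "z \<in> ?L" using zs xb ya zp by blast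
qed

end


lemma dvd_small_int: "(d::int) dvd x \<Longrightarrow> \<bar>x\<bar> < d \<Longrightarrow> x = 0"
proof (rule ccontr)
  assume a: "d dvd x" "\<bar>x\<bar> < d" "x \<noteq> 0"
  then have "\<bar>d\<bar> \<le> \<bar>x\<bar>" using dvd_imp_le_int by blast
  then show False using a(2) abs_ge_self[of d] by linarith
qed

lemma count_window:
  fixes M :: "int set" and b h :: int
  assumes bpos: "0 < b" and fin: "finite M"
    and uniq: "\<And>r. 0 \<le> r \<Longrightarrow> r < b \<Longrightarrow> \<exists>!m. m \<in> M \<and> m mod b = r"
    and nonneg: "\<And>m. m \<in> M \<Longrightarrow> 0 \<le> m" and zero: "0 \<in> M"
  shows "card {g. 0 \<le> g \<and> g < h \<and> h \<le> g + b \<and>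
            g \<notin> {m - b * t | m t. m \<in> M \<and> 1 \<le> t \<and> 0 < m - b * t}}
         = card {m \<in> M. m < h}"
proof -
  define R where "R = {m - b * t | m t. m \<in> M \<and> 1 \<le> t \<and> 0 < m - b * t}"
  define A where "A = {g. 0 \<le> g \<and> g < h \<and> h \<le> g + b \<and> g \<notin> R}"
  define B where "B = {m \<in> M. m < h}"
  have res_eq: "m = m'" if "m \<in> M" "m' \<in> M" "m mod b = m' mod b" for m m'
    using uniq[of "m mod b"] that bpos by auto
  have injA: "inj_on (\<lambda>g. g mod b) A"
  proof (rule inj_onI)
    fix g g' assume g: "g \<in> A" "g' \<in> A" "g mod b = g' mod b"
    then have "b dvd g - g'" by (simp add: mod_eq_dvd_iff)
    moreover have "\<bar>g - g'\<bar> < b" using g unfolding A_def by auto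
    ultimately show "g = g'" using dvd_small_int by fastforce
  qed
  have injB: "inj_on (\<lambda>g. g mod b) B" unfolding B_def by (rule inj_onI) (auto intro: res_eq)
  have finA: "finite A" unfolding A_def by (rule finite_subset[of _ "{0..h}"]) auto
  have img: "(\<lambda>g. g mod b) ` A = (\<lambda>g. g mod b) ` B"
  proof (rule set_eqI, rule iffI)
    fix r assume "r \<in> (\<lambda>g. g mod b) ` A"
    then obtain g where g: "g \<in> A" "r = g mod b" by auto
    obtain m where m: "m \<in> M" "m mod b = r" using uniq[of r] g bpos by auto
    have "m \<le> g"
    proof (rule ccontr)
      assume "\<not> m \<le> g"
      then have mg: "g < m" by simp
      have "b dvd m - g" using m g by (simp add: mod_eq_dvd_iff)
      then obtain t where t: "m - g = b * t" by (auto elim: dvdE)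
      have "0 < b * t" using mg t by simp
      then have t1: "1 \<le> t" using bpos by (simp add: zero_less_mult_iff)
      show False
      proof (cases "g = 0")
        case True
        then have "m mod b = 0 mod b" using m g by simp
        then have "m = 0" using res_eq[OF m(1) zero] by simp
        then show False using mg True by simp
      next
        case False
        then have "0 < g" using g unfolding A_def by simp
        then have "g \<in> R" unfolding R_def using m t t1 by (intro CollectI exI[of _ m] exI[of _ t]) simp
        then show False using g unfolding A_def by simp
      qed
    qed
    then have "m \<in> B" using g m unfolding A_def B_def by simp
    then show "r \<in> (\<lambda>g. g mod b) ` B" using m by auto
  next
    fix r assume "r \<in> (\<lambda>g. g mod b) ` B"
    then obtain m where m: "m \<in> M" "m < h" "r = m mod b" unfolding B_def by auto
    define q where "q = (h - 1 - m) div b"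
    define g where "g = m + b * q"
    have q0: "0 \<le> q" unfolding q_def using m bpos by (simp add: pos_imp_zdiv_nonneg_iff)
    have dm: "b * q + (h - 1 - m) mod b = h - 1 - m" unfolding q_def by simp
    have md: "0 \<le> (h - 1 - m) mod b" "(h - 1 - m) mod b < b" using bpos by simp_all
    have gr: "g mod b = r" unfolding g_def m by simp
    have "g \<in> A" unfolding A_def
    proof (intro CollectI conjI)
      show "0 \<le> g" unfolding g_def using nonneg[OF m(1)] q0 bpos by simp
      show "g < h" unfolding g_def using dm md by linarith
      show "h \<le> g + b" unfolding g_def using dm md by linarith
      show "g \<notin> R"
      proof
        assume "g \<in> R"
        then obtain m' t where mt: "g = m' - b * t" "m' \<in> M" "1 \<le> t" unfolding R_def by blast
        then have "m' = g + b * t" by simp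
        then have "m' mod b = g mod b" by simp
        then have "m' = m" using res_eq[OF mt(2) m(1)] gr m by simp
        then have "b * q = - b * t" using mt g_def by simp
        then have "q = - t" using mult_cancel_left[of b q "-t"] bpos by simp
        then show False using q0 mt by simp
      qed
    qed
    then show "r \<in> (\<lambda>g. g mod b) ` A" using gr by blast
  qed
  have "card A = card B"
    using card_image[OF injA] card_image[OF injB] img by simp
  then show ?thesis unfolding A_def B_def R_def .
qed

context pth begin

lemma EM_fin: "finite EM" unfolding EM_def ESt_def using Lv_fin by simp

lemma card_EM: "card EM = b"
  unfolding EM_def using card_image[of "\<lambda>l. l - int a" ESt] card_ESt by (simp add: inj_on_def)

lemma EM_elem: "m \<in> EM \<Longrightarrow> \<exists>j. j < n \<and> w!j = E \<and> m = K j - int a"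
  unfolding EM_def ESt_img by auto

lemma EM_res_inj: "inj_on (\<lambda>m. m mod int b) EM"
proof (rule inj_onI)
  fix m m' assume mm: "m \<in> EM" "m' \<in> EM" "m mod int b = m' mod int b"
  obtain j where j: "j < n" "w!j = E" "m = K j - int a" using EM_elem mm by blast
  obtain j' where j': "j' < n" "w!j' = E" "m' = K j' - int a" using EM_elem mm by blast
  define x where "x = int (countE (take j w)) - int (countE (take j' w))"
  define D where "D = int (countN (take j w)) - int (countN (take j' w))"
  have d1: "int b dvd m - m'" using mm by (simp add: mod_eq_dvd_iff)
  have "m - m' = int b * D - int a * x"
    unfolding j j' K_eq x_def D_def by (simp add: algebra_simps)
  then have eq: "int a * x = int b * D - (m - m')" by simp
  have "int b dvd int a * x" unfolding eq by (rule dvd_diff[OF dvd_triv_left d1])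
  moreover have "coprime (int b) (int a)" using cop by (simp add: coprime_commute)
  ultimately have "int b dvd x" using coprime_dvd_mult_right_iff by blast
  moreover have "\<bar>x\<bar> < int b"
  proof -
    have "countE (take j w) < b" "countE (take j' w) < b" using cE_lt[of j w] cE_lt[of j' w] j j' len cE by simp_all
    then show ?thesis unfolding x_def by linarith
  qed
  ultimately have x0: "x = 0" using dvd_small_int by blast
  have "j = j'"
  proof (rule ccontr)
    assume "j \<noteq> j'"
    then have "j < j' \<or> j' < j" by auto
    then show False
    proof
      assume "j < j'" then show False using cE_strict[of j j' w] j j' len x0 x_def by simp
    next
      assume "j' < j" then show False using cE_strict[of j' j w] j j' len x0 x_def by simp
    qed
  qed
  then show "m = m'" using j j' by simp
qed

lemma EM_res: "0 \<le> r \<Longrightarrow> r < int b \<Longrightarrow> \<exists>!m. m \<in> EM \<and> m mod int b = r"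
proof -
  assume r: "0 \<le> r" "r < int b"
  have sub: "(\<lambda>m. m mod int b) ` EM \<subseteq> {0..<int b}" using bpos by auto
  have "card ((\<lambda>m. m mod int b) ` EM) = b" using card_image[OF EM_res_inj] card_EM by simp
  then have "(\<lambda>m. m mod int b) ` EM = {0..<int b}"
    using card_subset_eq[OF _ sub] by simp
  moreover have "r \<in> {0..<int b}" using r by simp
  ultimately have "r \<in> (\<lambda>m. m mod int b) ` EM" by simp
  then obtain m where "m \<in> EM" "m mod int b = r" by auto
  then show ?thesis using EM_res_inj by (auto simp: inj_on_def)
qed

lemma zero_EM: "0 \<in> EM"
proof -
  obtain j where j: "j < length w" "w!j = E" "countE (take j w) = b - 1"
    using cE_exists[of "b - 1" w] cE bpos by auto
  have m: "K j - int a \<in> EM" unfolding EM_def ESt_img using j len by auto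
  define e where "e = countN (take j w)"
  have ea: "e \<le> a" unfolding e_def using cN_le[of j w] cN by simp
  have cb: "int (countE (take j w)) = int b - 1" using j bpos by simp
  have meq: "K j - int a = int b * int e - int a * int b"
    unfolding K_eq e_def cb by (simp add: algebra_simps)
  have "0 \<le> int b * int e - int a * int b" using EM_nonneg[OF m] meq by simp
  then have "int a * int b \<le> int e * int b" by (simp add: algebra_simps)
  then have "int a \<le> int e" using bpos mult_right_le_imp_le[of "int a" "int b" "int e"] by simp
  then have "e = a" using ea by simp
  then show ?thesis using m meq by simp
qed

end


lemma length_filter_drop: "length (filter P (drop k xs)) = card {i. k \<le> i \<and> i < length xs \<and> P (xs!i)}"
proof -
  have "length (filter P (drop k xs)) = card {i. i < length (drop k xs) \<and> P (drop k xs ! i)}"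
    by (rule length_filter_conv_card)
  also have "\<dots> = card ((\<lambda>i. i + k) ` {i. i < length (drop k xs) \<and> P (drop k xs ! i)})"
    by (rule card_image[symmetric]) (simp add: inj_on_def)
  also have "(\<lambda>i. i + k) ` {i. i < length (drop k xs) \<and> P (drop k xs ! i)} = {i. k \<le> i \<and> i < length xs \<and> P (xs!i)}"
  proof (rule set_eqI, rule iffI)
    fix x assume "x \<in> (\<lambda>i. i + k) ` {i. i < length (drop k xs) \<and> P (drop k xs ! i)}"
    then show "x \<in> {i. k \<le> i \<and> i < length xs \<and> P (xs!i)}" by (auto simp: add.commute)
  next
    fix x assume x: "x \<in> {i. k \<le> i \<and> i < length xs \<and> P (xs!i)}"
    then show "x \<in> (\<lambda>i. i + k) ` {i. i < length (drop k xs) \<and> P (drop k xs ! i)}"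
      by (intro image_eqI[of _ _ "x - k"]) auto
  qed
  finally show ?thesis .
qed

locale partn =
  fixes \<nu> :: "nat list"
  assumes part: "is_partition \<nu>"
begin

abbreviation "m \<equiv> length \<nu>"

lemma pos: "i < m \<Longrightarrow> 0 < \<nu>!i" using part unfolding is_partition_def by auto

lemma dec: "i \<le> i' \<Longrightarrow> i' < m \<Longrightarrow> \<nu>!i' \<le> \<nu>!i"
  using part unfolding is_partition_def
  by (metis le_eq_less_or_eq order.refl sorted_wrt_iff_nth_less)

definition A :: "nat \<Rightarrow> nat \<Rightarrow> nat" where "A i j = card {i'. i < i' \<and> i' < m \<and> j < \<nu>!i'}"

lemma hook_A: "hook \<nu> i j = (\<nu>!i - j) + A i j"
  unfolding hook_def A_def length_filter_drop by (simp add: Suc_le_eq)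

lemma A_le: "A i j \<le> m - 1 - i"
proof -
  have "{i'. i < i' \<and> i' < m \<and> j < \<nu>!i'} \<subseteq> {Suc i..<m}" by auto
  then have "A i j \<le> card {Suc i..<m}" unfolding A_def by (intro card_mono) auto
  then show ?thesis by simp
qed

lemma A0: "A i 0 = m - 1 - i"
proof -
  have "{i'. i < i' \<and> i' < m \<and> 0 < \<nu>!i'} = {Suc i..<m}" using pos by auto
  then show ?thesis unfolding A_def by simp
qed

lemma hook0: "hook \<nu> i 0 = \<nu>!i + (m - 1 - i)" using hook_A A0 by simp

lemma A_mono: "j \<le> j' \<Longrightarrow> A i j' \<le> A i j"
  unfolding A_def by (intro card_mono) auto

lemma A_ge: "i < i' \<Longrightarrow> i' < m \<Longrightarrow> j < \<nu>!i' \<Longrightarrow> i' - i \<le> A i j"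
proof -
  assume a: "i < i'" "i' < m" "j < \<nu>!i'"
  have "{Suc i..i'} \<subseteq> {i'. i < i' \<and> i' < m \<and> j < \<nu>!i'}"
    using a dec[of _ i'] by fastforce
  then have "card {Suc i..i'} \<le> A i j" unfolding A_def by (intro card_mono) auto
  then show ?thesis by simp
qed

lemma A_le2: "i < i' \<Longrightarrow> i' < m \<Longrightarrow> \<nu>!i' \<le> j \<Longrightarrow> A i j \<le> i' - i - 1"
proof -
  assume a: "i < i'" "i' < m" "\<nu>!i' \<le> j"
  have "{i'. i < i' \<and> i' < m \<and> j < \<nu>!i'} \<subseteq> {Suc i..<i'}"
  proof
    fix k assume k: "k \<in> {i'. i < i' \<and> i' < m \<and> j < \<nu>!i'}"
    have "k < i'"
    proof (rule ccontr)
      assume "\<not> k < i'"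
      then have "\<nu>!k \<le> \<nu>!i'" using dec[of i' k] k by simp
      then show False using k a by simp
    qed
    then show "k \<in> {Suc i..<i'}" using k by simp
  qed
  then have "A i j \<le> card {Suc i..<i'}" unfolding A_def by (intro card_mono) auto
  then show ?thesis by simp
qed

definition H :: "nat set" where "H = first_col_hooks \<nu>"

lemma H_eq: "H = (\<lambda>i. hook \<nu> i 0) ` {..<m}"
  unfolding H_def first_col_hooks_def by auto

lemma hk_strict: "i < i' \<Longrightarrow> i' < m \<Longrightarrow> hook \<nu> i' 0 < hook \<nu> i 0"
  using hook0[of i] hook0[of i'] dec[of i i'] by simp

lemma hook_strict: "j < j' \<Longrightarrow> j' \<le> \<nu>!i \<Longrightarrow> hook \<nu> i j' < hook \<nu> i j"
  using hook_A[of i j] hook_A[of i j'] A_mono[of j j' i] by simp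

lemma hook_le_h: "j < \<nu>!i \<Longrightarrow> hook \<nu> i j \<le> hook \<nu> i 0"
  using hook_strict[of 0 j i] by (cases j) auto

lemma hook_pos: "j < \<nu>!i \<Longrightarrow> 1 \<le> hook \<nu> i j"
  using hook_A[of i j] by simp

lemma g_notin:
  assumes i: "i < m" and j: "j < \<nu>!i"
  shows "hook \<nu> i 0 - hook \<nu> i j \<notin> H"
proof
  assume "hook \<nu> i 0 - hook \<nu> i j \<in> H"
  then obtain i' where i': "i' < m" "hook \<nu> i' 0 = hook \<nu> i 0 - hook \<nu> i j" unfolding H_eq by auto
  have hk: "hook \<nu> i j = (\<nu>!i - j) + A i j" by (rule hook_A)
  have h0: "hook \<nu> i 0 = \<nu>!i + (m - 1 - i)" by (rule hook0)
  have Al: "A i j \<le> m - 1 - i" by (rule A_le)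
  show False
  proof (cases "i < i'")
    case False
    then have "hook \<nu> i 0 \<le> hook \<nu> i' 0"
      using hk_strict[of i' i] i by (cases "i = i'") auto
    then show False using i' hook_pos[OF j] hook_le_h[OF j] by simp
  next
    case True
    have h0': "hook \<nu> i' 0 = \<nu>!i' + (m - 1 - i')" by (rule hook0)
    show False
    proof (cases "j < \<nu>!i'")
      case True
      then have "i' - i \<le> A i j" using A_ge[of i i' j] \<open>i < i'\<close> i' by simp
      then show False using i' hk h0 h0' Al j True \<open>i < i'\<close> by linarith
    next
      case False
      then have "A i j \<le> i' - i - 1" using A_le2[of i i' j] \<open>i < i'\<close> i' by simp
      then show False using i' hk h0 h0' Al j False \<open>i < i'\<close> by linarith
    qed
  qed
qed

lemma card_gaps:
  assumes i: "i < m"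
  shows "card {g. g < hook \<nu> i 0 \<and> g \<notin> H} = \<nu>!i"
proof -
  define h where "h = hook \<nu> i 0"
  have Hl: "H \<inter> {..<h} = (\<lambda>i'. hook \<nu> i' 0) ` {Suc i..<m}"
  proof (rule set_eqI, rule iffI)
    fix x assume "x \<in> H \<inter> {..<h}"
    then obtain i' where i': "i' < m" "x = hook \<nu> i' 0" "x < h" unfolding H_eq by auto
    have "i < i'"
    proof (rule ccontr)
      assume "\<not> i < i'"
      then have "h \<le> hook \<nu> i' 0" unfolding h_def using hk_strict[of i' i] i by (cases "i = i'") auto
      then show False using i' by simp
    qed
    then show "x \<in> (\<lambda>i'. hook \<nu> i' 0) ` {Suc i..<m}" using i' by auto
  next
    fix x assume "x \<in> (\<lambda>i'. hook \<nu> i' 0) ` {Suc i..<m}"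
    then obtain i' where ii: "i' \<in> {Suc i..<m}" "x = hook \<nu> i' 0" by (rule imageE)
    then have "x < h" unfolding h_def using hk_strict[of i i'] by simp
    moreover have "x \<in> H" unfolding H_eq using ii by auto
    ultimately show "x \<in> H \<inter> {..<h}" by simp
  qed
  have inj: "inj_on (\<lambda>i'. hook \<nu> i' 0) {Suc i..<m}"
    by (rule inj_onI) (metis atLeastLessThan_iff hk_strict less_irrefl nat_neq_iff)
  have cH: "card (H \<inter> {..<h}) = m - 1 - i" unfolding Hl card_image[OF inj] by simp
  have "{g. g < h \<and> g \<notin> H} = {..<h} - (H \<inter> {..<h})" by auto
  then have "card {g. g < h \<and> g \<notin> H} = h - (m - 1 - i)"
    using cH by (simp add: card_Diff_subset)
  then show ?thesis unfolding h_def hook0 by simp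
qed

lemma hook_count:
  assumes i: "i < m"
  shows "card {j. j < \<nu>!i \<and> hook \<nu> i j \<le> b} = card {g. g < hook \<nu> i 0 \<and> hook \<nu> i 0 \<le> g + b \<and> g \<notin> H}"
proof -
  define h where "h = hook \<nu> i 0"
  define gf where "gf = (\<lambda>j. h - hook \<nu> i j)"
  have inj: "inj_on gf {..<\<nu>!i}"
  proof (rule inj_onI)
    fix j j' assume jj: "j \<in> {..<\<nu>!i}" "j' \<in> {..<\<nu>!i}" "gf j = gf j'"
    have "hook \<nu> i j = hook \<nu> i j'"
      using jj hook_le_h[of j i] hook_le_h[of j' i] unfolding gf_def h_def by simp
    then show "j = j'" using hook_strict[of j j' i] hook_strict[of j' j i] jj
      by (metis lessThan_iff less_imp_le_nat nat_neq_iff order.irrefl)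
  qed
  have sub: "gf ` {..<\<nu>!i} \<subseteq> {g. g < h \<and> g \<notin> H}"
  proof
    fix x assume "x \<in> gf ` {..<\<nu>!i}"
    then obtain j where j: "j < \<nu>!i" "x = gf j" by auto
    then show "x \<in> {g. g < h \<and> g \<notin> H}"
      using g_notin[OF i j(1)] hook_pos[OF j(1)] hook_le_h[OF j(1)] unfolding gf_def h_def by auto
  qed
  have fin: "finite {g. g < h \<and> g \<notin> H}" by simp
  have "card (gf ` {..<\<nu>!i}) = \<nu>!i" using card_image[OF inj] by simp
  then have img: "gf ` {..<\<nu>!i} = {g. g < h \<and> g \<notin> H}"
    using card_subset_eq[OF fin sub] card_gaps[OF i] unfolding h_def by simp
  have inj2: "inj_on gf {j. j < \<nu>!i \<and> hook \<nu> i j \<le> b}"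
    using inj by (rule inj_on_subset) auto
  have "gf ` {j. j < \<nu>!i \<and> hook \<nu> i j \<le> b} = {g. g < h \<and> h \<le> g + b \<and> g \<notin> H}"
  proof (rule set_eqI, rule iffI)
    fix x assume "x \<in> gf ` {j. j < \<nu>!i \<and> hook \<nu> i j \<le> b}"
    then obtain j where j: "j < \<nu>!i" "hook \<nu> i j \<le> b" "x = gf j" by auto
    then have "x \<in> {g. g < h \<and> g \<notin> H}" using img by auto
    moreover have "h \<le> x + b" using j hook_le_h[OF j(1)] unfolding gf_def h_def by simp
    ultimately show "x \<in> {g. g < h \<and> h \<le> g + b \<and> g \<notin> H}" by simp
  next
    fix x assume x: "x \<in> {g. g < h \<and> h \<le> g + b \<and> g \<notin> H}"
    then have "x \<in> gf ` {..<\<nu>!i}" using img by simp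
    then obtain j where j: "j < \<nu>!i" "x = gf j" by auto
    moreover have "h \<le> x + b" using x by simp
    ultimately have "hook \<nu> i j \<le> b" using hook_le_h[OF j(1)] unfolding gf_def h_def by linarith
    then show "x \<in> gf ` {j. j < \<nu>!i \<and> hook \<nu> i j \<le> b}" using j by auto
  qed
  then show ?thesis using card_image[OF inj2] unfolding h_def by simp
qed

end


context partn begin

definition hkl where "hkl = map (\<lambda>i. hook \<nu> i 0) [0..<m]"

lemma hkl_sorted: "sorted_wrt (>) hkl"
  unfolding hkl_def sorted_wrt_iff_nth_less using hk_strict by simp

lemma hkl_set: "set hkl = first_col_hooks \<nu>"
  unfolding hkl_def first_col_hooks_def by auto

lemma slos_H: "sorted_list_of_set (first_col_hooks \<nu>) = rev hkl"
proof -
  have "sorted_wrt (<) (rev hkl)" using hkl_sorted by (simp add: sorted_wrt_rev)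
  then have "sorted (rev hkl)" "distinct (rev hkl)" by (simp_all add: strict_sorted_iff)
  then show ?thesis using sorted_list_of_set.idem_if_sorted_distinct hkl_set by fastforce
qed

end

lemma part_unique:
  assumes "is_partition \<nu>1" "is_partition \<nu>2" "first_col_hooks \<nu>1 = first_col_hooks \<nu>2"
  shows "\<nu>1 = \<nu>2"
proof -
  interpret p1: partn \<nu>1 by unfold_locales (rule assms(1))
  interpret p2: partn \<nu>2 by unfold_locales (rule assms(2))
  have "rev p1.hkl = rev p2.hkl" using p1.slos_H p2.slos_H assms(3) by simp
  then have e: "p1.hkl = p2.hkl" by simp
  then have len: "length \<nu>1 = length \<nu>2" unfolding p1.hkl_def p2.hkl_def by (metis length_map length_upt minus_nat.diff_0)
  show ?thesis
  proof (rule nth_equalityI[OF len])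
    fix i assume i: "i < length \<nu>1"
    have "p1.hkl ! i = p2.hkl ! i" using e by simp
    then have "hook \<nu>1 i 0 = hook \<nu>2 i 0" unfolding p1.hkl_def p2.hkl_def using i len by simp
    then show "\<nu>1 ! i = \<nu>2 ! i" using p1.hook0[of i] p2.hook0[of i] len by simp
  qed
qed

lemma gap_lemma: "sorted_wrt (>) (L::nat list) \<Longrightarrow> i + d < length L \<Longrightarrow> L!(i+d) + d \<le> L!i"
proof (induction d)
  case 0 then show ?case by simp
next
  case (Suc d)
  then have "L!(i + Suc d) < L!(i+d)" using sorted_wrt_nth_less[OF Suc.prems(1), of "i+d" "i + Suc d"] by simp
  then show ?case using Suc by simp
qed

lemma part_exists:
  assumes fin: "finite S" and pos: "\<forall>s\<in>S. (0::nat) < s"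
  shows "\<exists>\<nu>. is_partition \<nu> \<and> first_col_hooks \<nu> = S"
proof -
  define L where "L = rev (sorted_list_of_set S)"
  define k where "k = length L"
  have sL: "sorted_wrt (>) L" unfolding L_def by (simp add: sorted_wrt_rev)
  have setL: "set L = S" unfolding L_def using fin by simp
  have Lpos: "i < k \<Longrightarrow> 1 \<le> L!i" for i
  proof -
    assume "i < k"
    then have "L!i \<in> S" using setL k_def nth_mem by blast
    then show ?thesis using pos by (simp add: Suc_le_eq)
  qed
  have big: "i < k \<Longrightarrow> (k - 1 - i) + 1 \<le> L!i" for i
  proof -
    assume i: "i < k"
    then have "i + (k - 1 - i) = k - 1" by simp
    then have "L!(k-1) + (k - 1 - i) \<le> L!i" using gap_lemma[OF sL, of i "k - 1 - i"] i k_def by simp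
    moreover have "1 \<le> L!(k-1)" using Lpos[of "k - 1"] i by simp
    ultimately show ?thesis by simp
  qed
  define \<nu> where "\<nu> = map (\<lambda>i. L!i - (k - 1 - i)) [0..<k]"
  have lnu: "length \<nu> = k" unfolding \<nu>_def by simp
  have nth: "i < k \<Longrightarrow> \<nu>!i = L!i - (k - 1 - i)" for i unfolding \<nu>_def by simp
  have part: "is_partition \<nu>"
    unfolding is_partition_def
  proof
    show "sorted_wrt (\<ge>) \<nu>" unfolding sorted_wrt_iff_nth_less lnu
    proof (intro allI impI)
      fix i j assume ij: "i < j" "j < k"
      have "L!j + (j - i) \<le> L!i" using gap_lemma[OF sL, of i "j - i"] ij k_def by simp
      then show "\<nu>!j \<le> \<nu>!i" using nth[of i] nth[of j] big[of j] ij by simp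
    qed
    show "\<forall>p\<in>set \<nu>. 0 < p"
    proof
      fix p assume "p \<in> set \<nu>"
      then obtain i where "i < k" "p = \<nu>!i" using lnu by (metis in_set_conv_nth)
      then show "0 < p" using nth big by fastforce
    qed
  qed
  interpret partn \<nu> by unfold_locales (rule part)
  have "first_col_hooks \<nu> = set L"
  proof -
    have "\<And>i. i < k \<Longrightarrow> hook \<nu> i 0 = L!i" using hook0 nth big lnu by fastforce
    then have "first_col_hooks \<nu> = (\<lambda>i. L!i) ` {..<k}" unfolding first_col_hooks_def using lnu
      by (auto intro!: image_eqI) (metis)
    also have "\<dots> = set L" unfolding k_def by (auto simp: in_set_conv_nth)
    finally show ?thesis .
  qed
  then show ?thesis using part setL by blast
qed

lemma fmap_prop:
  assumes fin: "finite (region_levels a b \<pi>)" and pos: "\<forall>r\<in>region_levels a b \<pi>. 0 < r"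
  shows "is_partition (f_map a b \<pi>) \<and> int ` first_col_hooks (f_map a b \<pi>) = region_levels a b \<pi>"
proof -
  define R where "R = region_levels a b \<pi>"
  have "\<exists>\<nu>. is_partition \<nu> \<and> first_col_hooks \<nu> = nat ` R"
    using part_exists[of "nat ` R"] fin pos unfolding R_def by auto
  then obtain \<nu> where nu: "is_partition \<nu>" "first_col_hooks \<nu> = nat ` R" by blast
  have "int ` nat ` R = R" using pos unfolding R_def by (force simp: image_image)
  then have ex: "is_partition \<nu> \<and> int ` first_col_hooks \<nu> = R" using nu by simp
  have "\<exists>!\<nu>. is_partition \<nu> \<and> int ` first_col_hooks \<nu> = R"
  proof (rule ex1I[of _ \<nu>])
    show "is_partition \<nu> \<and> int ` first_col_hooks \<nu> = R" by (rule ex)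
    fix \<nu>' assume a: "is_partition \<nu>' \<and> int ` first_col_hooks \<nu>' = R"
    then have "int ` first_col_hooks \<nu>' = int ` first_col_hooks \<nu>" using ex by simp
    then have "first_col_hooks \<nu>' = first_col_hooks \<nu>" by (simp add: inj_image_eq_iff)
    then show "\<nu>' = \<nu>" using part_unique a ex by blast
  qed
  then show ?thesis unfolding f_map_def R_def by (rule theI')
qed



context pth begin

definition RG where "RG = {sqlev a b x y | x y. x < b \<and> y < a \<and> 0 < sqlev a b x y \<and>
      (\<exists>x'. (x', y) \<in> nsteps w \<and> x' \<le> x)}"

lemma RG_fin: "finite RG"
proof -
  have "RG \<subseteq> (\<lambda>(x, y). sqlev a b x y) ` ({..<b} \<times> {..<a})" unfolding RG_def by auto
  then show ?thesis by (rule finite_subset) simp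
qed

lemma RG_pos: "r \<in> RG \<Longrightarrow> 0 < r" unfolding RG_def by auto

lemma RG_M: "RG = {m - int b * t | m t. m \<in> EM \<and> 1 \<le> t \<and> 0 < m - int b * t}"
  unfolding RG_def by (rule region_eq)

lemma NL_elem: "l \<in> NL \<Longrightarrow> \<exists>i. i < n \<and> w!i = N \<and> l = K i"
  unfolding NL_img by auto

lemma NL_sq: "l \<in> NL \<Longrightarrow> int a < l \<Longrightarrow> l - int a \<in> RG"
proof -
  assume l: "l \<in> NL" "int a < l"
  obtain i where i: "i < n" "w!i = N" "l = K i" using NL_elem l by blast
  define x where "x = countE (take i w)"
  define y where "y = countN (take i w)"
  have sq: "sqlev a b x y = l - int a" unfolding x_def y_def using sqlev_K i by simp
  have ya: "y < a" unfolding y_def using cN_lt[of i w] i len cN by simp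
  have pos: "0 < sqlev a b x y" using sq l by simp
  then have "int a * (int x + 1) < int b * int y" unfolding sqlev_def ptlev_def by (simp add: algebra_simps)
  also have "\<dots> \<le> int b * int a" using ya by (intro mult_left_mono) simp_all
  finally have "int a * (int x + 1) < int a * int b" by (simp add: mult.commute)
  then have "int x + 1 < int b" using apos by (simp add: mult_less_cancel_left)
  then have xb: "x < b" by simp
  have "(x, y) \<in> nsteps w" unfolding nsteps_def x_def y_def using i len by auto
  then have "x < b \<and> y < a \<and> 0 < sqlev a b x y \<and> (\<exists>x'. (x', y) \<in> nsteps w \<and> x' \<le> x)"
    using xb ya pos by blast
  then show ?thesis unfolding RG_def sq[symmetric] by blast
qed

lemma a_notin_NL: "int a \<notin> NL"
proof
  assume "int a \<in> NL"
  then obtain i where i: "i < n" "w!i = N" "int a = K i" using NL_elem by blast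
  define x where "x = countE (take i w)"
  define y where "y = countN (take i w)"
  have ya: "y < a" unfolding y_def using cN_lt[of i w] i len cN by simp
  have "int a = int b * int y - int a * int x" using i K_eq x_def y_def by simp
  then have "int (b * y) = int (a * (x + 1))" by (simp add: algebra_simps)
  then have e: "b * y = a * (x + 1)" by (simp only: of_nat_eq_iff)
  then have "a dvd b * y" by simp
  then have "a dvd y" using cop coprime_dvd_mult_right_iff by blast
  then have "y = 0" using ya by (metis dvd_imp_le not_le neq0_conv)
  then show False using e apos by simp
qed

lemma cnt_EM: "cnt l = card {m \<in> EM. m < l - int a}"
proof -
  have "{l' \<in> Lv. st l' = E \<and> l' < l} = {l' \<in> ESt. l' < l}" unfolding ESt_def by auto
  moreover have "{m \<in> EM. m < l - int a} = (\<lambda>x. x - int a) ` {l' \<in> ESt. l' < l}"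
    unfolding EM_def by auto
  moreover have "card ((\<lambda>x. x - int a) ` {l' \<in> ESt. l' < l}) = card {l' \<in> ESt. l' < l}"
    by (rule card_image) (simp add: inj_on_def)
  ultimately show ?thesis unfolding cnt_def by simp
qed

lemma cnt_small: "l \<le> int a \<Longrightarrow> cnt l = 0"
proof -
  assume l: "l \<le> int a"
  have "{m \<in> EM. m < l - int a} = {}" using EM_nonneg l by fastforce
  then show ?thesis using cnt_EM[of l] by (simp del: Collect_empty_eq)
qed

end



lemma slos_mono_img:
  assumes fin: "finite S" and mono: "\<And>x y. x \<in> S \<Longrightarrow> y \<in> S \<Longrightarrow> x < y \<Longrightarrow> f x < f y"
  shows "sorted_list_of_set (f ` S) = map f (sorted_list_of_set S)"
proof (rule slos_eq)
  show "finite (f ` S)" using fin by simp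
  have "sorted_wrt (<) (sorted_list_of_set S)" by simp
  then have "sorted_wrt (\<lambda>x y. f x < f y) (sorted_list_of_set S)"
    by (rule sorted_wrt_mono_rel[rotated]) (use fin mono in auto)
  then show "sorted_wrt (<) (map f (sorted_list_of_set S))" by (simp add: sorted_wrt_map)
  show "set (map f (sorted_list_of_set S)) = f ` S" using fin by simp
qed

theorem mainTheorem5:
  fixes a b :: nat and \<pi> :: "nat list"
  assumes "0 < a" and "0 < b" and "gcd a b = 1"
    and "\<pi> \<in> Dset a b"
  shows "word a b (zeta a b \<pi>) = sweep a b (rev (word a b \<pi>))"
proof -
  define w where "w = word a b \<pi>"
  have pi: "is_partition \<pi>" "fits a b \<pi>" "\<forall>i \<le> length w. 0 \<le> wlev a b (take i w)"
    using assms(4) unfolding Dset_def w_def by auto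
  interpret pth a b w
  proof
    show "0 < a" "0 < b" by fact+
    show "coprime a b" using assms(3) by (simp add: coprime_iff_gcd_eq_1)
    show "countN w = a" "countE w = b" unfolding w_def using word_counts[OF pi(1,2)] by simp_all
    show "\<forall>i \<le> length w. 0 \<le> wlev a b (take i w)" by (rule pi(3))
  qed
  have RL: "region_levels a b \<pi> = RG" unfolding RG_def unfolding region_levels_def w_def ..
  have EL: "east_levels a b \<pi> = (\<lambda>l. l - int a) ` NL"
    unfolding east_levels_def w_def[symmetric] by (rule east_eq)
  define \<nu> where "\<nu> = f_map a b \<pi>"
  have nuprop: "is_partition \<nu>" "int ` first_col_hooks \<nu> = RG"
    using fmap_prop[of a b \<pi>] RL RG_fin RG_pos unfolding \<nu>_def by auto
  interpret P: partn \<nu> by unfold_locales (rule nuprop(1))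
  define Hs where "Hs = first_col_hooks \<nu>"
  have HRG: "h \<in> Hs \<longleftrightarrow> int h \<in> RG" for h
  proof -
    have "int h \<in> int ` Hs \<longleftrightarrow> h \<in> Hs" by auto
    then show ?thesis using nuprop(2) unfolding Hs_def by simp
  qed
  define G where "G = (\<lambda>h. card {g. g < h \<and> h \<le> g + b \<and> g \<notin> Hs})"
  define Q where "Q = (\<lambda>h::nat. int h \<in> east_levels a b \<pi>)"
  define \<rho> where "\<rho> = zeta a b \<pi>"
  have rho1: "\<rho> = map (\<lambda>i. card {j. j < \<nu> ! i \<and> hook \<nu> i j \<le> b})
         (filter (\<lambda>i. Q (hook \<nu> i 0)) [0..<length \<nu>])"
    unfolding \<rho>_def zeta_def \<nu>_def Q_def Let_def ..
  also have "\<dots> = map (\<lambda>i. G (hook \<nu> i 0)) (filter (\<lambda>i. Q (hook \<nu> i 0)) [0..<length \<nu>])"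
    using P.hook_count unfolding G_def P.H_def Hs_def by (intro map_cong) auto
  also have "\<dots> = map G (filter Q P.hkl)"
    unfolding P.hkl_def by (simp add: filter_map comp_def)
  finally have rho2: "\<rho> = map G (filter Q P.hkl)" .
  have revrho: "rev \<rho> = map G (sorted_list_of_set {h \<in> Hs. Q h})"
  proof -
    have "rev \<rho> = map G (filter Q (rev P.hkl))" unfolding rho2 by (simp add: rev_filter rev_map)
    also have "rev P.hkl = sorted_list_of_set Hs" unfolding Hs_def P.slos_H ..
    also have "filter Q (sorted_list_of_set Hs) = sorted_list_of_set {h \<in> Hs. Q h}"
    proof (rule sym, rule slos_eq)
      have fH: "finite Hs" unfolding Hs_def first_col_hooks_def by simp
      then show "finite {h \<in> Hs. Q h}" by simp
      show "sorted_wrt (<) (filter Q (sorted_list_of_set Hs))" by (simp add: sorted_wrt_filter)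
      show "set (filter Q (sorted_list_of_set Hs)) = {h \<in> Hs. Q h}" using fH by auto
    qed
    finally show ?thesis .
  qed
  define NLg where "NLg = {l \<in> NL. int a < l}"
  define NLs where "NLs = {l \<in> NL. l < int a}"
  define f where "f = (\<lambda>l. nat (l - int a))"
  have HQ: "{h \<in> Hs. Q h} = f ` NLg"
  proof (rule set_eqI, rule iffI)
    fix h assume h: "h \<in> {h \<in> Hs. Q h}"
    then obtain l where l: "l \<in> NL" "int h = l - int a" unfolding Q_def EL by auto
    have "int h \<in> RG" using h HRG by auto
    then have "0 < int h" using RG_pos by blast
    then have "l \<in> NLg" "h = f l" using l unfolding NLg_def f_def by auto
    then show "h \<in> f ` NLg" by blast
  next
    fix h assume "h \<in> f ` NLg"
    then obtain l where l: "l \<in> NL" "int a < l" "h = f l" unfolding NLg_def by auto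
    have ih: "int h = l - int a" using l unfolding f_def by simp
    have "int h \<in> RG" using NL_sq[OF l(1,2)] ih by simp
    then have "h \<in> Hs" using HRG by simp
    moreover have "Q h" unfolding Q_def EL using ih l by auto
    ultimately show "h \<in> {h \<in> Hs. Q h}" by simp
  qed
  have fNLg: "finite NLg" unfolding NLg_def using fin_NL by simp
  have fNLs: "finite NLs" unfolding NLs_def using fin_NL by simp
  have slosf: "sorted_list_of_set (f ` NLg) = map f (sorted_list_of_set NLg)"
    by (rule slos_mono_img[OF fNLg]) (auto simp: f_def NLg_def)
  have Gf: "G (f l) = cnt l" if l: "l \<in> NLg" for l
  proof -
    define h where "h = f l"
    have ih: "int h = l - int a" using l unfolding h_def f_def NLg_def by simp
    have "G h = card (int ` {g. g < h \<and> h \<le> g + b \<and> g \<notin> Hs})"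
      unfolding G_def by (rule card_image[symmetric]) simp
    also have "int ` {g. g < h \<and> h \<le> g + b \<and> g \<notin> Hs} =
       {g. 0 \<le> g \<and> g < int h \<and> int h \<le> g + int b \<and> g \<notin> RG}"
    proof (rule set_eqI, rule iffI)
      fix x assume "x \<in> int ` {g. g < h \<and> h \<le> g + b \<and> g \<notin> Hs}"
      then obtain g where "g < h" "h \<le> g + b" "g \<notin> Hs" "x = int g" by auto
      then show "x \<in> {g. 0 \<le> g \<and> g < int h \<and> int h \<le> g + int b \<and> g \<notin> RG}" using HRG by auto
    next
      fix x assume x: "x \<in> {g. 0 \<le> g \<and> g < int h \<and> int h \<le> g + int b \<and> g \<notin> RG}"
      then have "x = int (nat x)" by simp
      moreover have "nat x \<in> {g. g < h \<and> h \<le> g + b \<and> g \<notin> Hs}" using x HRG by auto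
      ultimately show "x \<in> int ` {g. g < h \<and> h \<le> g + b \<and> g \<notin> Hs}" by blast
    qed
    also have "card {g. 0 \<le> g \<and> g < int h \<and> int h \<le> g + int b \<and> g \<notin> RG} = card {m \<in> EM. m < int h}"
      unfolding RG_M
      by (rule count_window) (use bpos EM_fin EM_res EM_nonneg zero_EM in auto)
    also have "\<dots> = cnt l" unfolding cnt_EM ih ..
    finally show ?thesis unfolding h_def .
  qed
  have revrho2: "rev \<rho> = map cnt (sorted_list_of_set NLg)"
    unfolding revrho HQ slosf using Gf fNLg by (simp add: comp_def)
  have lrho: "length \<rho> = card NLg"
    using arg_cong[OF revrho2, of length] fNLg by simp
  have NLsplit: "NL = NLs \<union> NLg"
  proof (rule set_eqI)
    fix x show "x \<in> NL \<longleftrightarrow> x \<in> NLs \<union> NLg"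
      unfolding NLs_def NLg_def using a_notin_NL by (cases "x < int a"; cases "x = int a") auto
  qed
  have disj: "NLs \<inter> NLg = {}" unfolding NLs_def NLg_def by auto
  have cards: "card NLs + card NLg = a"
    using card_Un_disjoint[OF fNLs fNLg disj] NLsplit card_NL by simp
  have slosNL: "sorted_list_of_set NL = sorted_list_of_set NLs @ sorted_list_of_set NLg"
  proof (rule slos_eq[OF fin_NL])
    show "sorted_wrt (<) (sorted_list_of_set NLs @ sorted_list_of_set NLg)"
      unfolding sorted_wrt_append using fNLs fNLg unfolding NLs_def NLg_def by auto
    show "set (sorted_list_of_set NLs @ sorted_list_of_set NLg) = NL"
      using fNLs fNLg NLsplit by simp
  qed
  have small: "map cnt (sorted_list_of_set NLs) = replicate (card NLs) 0"
  proof -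
    have "map cnt (sorted_list_of_set NLs) = map (\<lambda>_. 0) (sorted_list_of_set NLs)"
      using fNLs by (intro map_cong) (auto simp: NLs_def intro!: cnt_small)
    then show ?thesis by (simp add: map_replicate_const)
  qed
  have mu: "replicate (a - length \<rho>) 0 @ rev \<rho> = map cnt (sorted_list_of_set NL)"
    unfolding slosNL map_append small revrho2 lrho using cards by simp
  have "word a b \<rho> = word_aux 0 (map cnt (sorted_list_of_set NL)) @
      replicate (b - last (0 # map cnt (sorted_list_of_set NL))) E"
    unfolding word_def Let_def mu ..
  also have "\<dots> = T" using T_word by simp
  also have "T = sweep a b (rev w)" unfolding T_def using sweep_eq by simp
  finally show ?thesis unfolding \<rho>_def w_def .
qed


end
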